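(* There exist a sequence of primes $p_j\to\infty$ and a sequence of angles $\alpha_j\in(0,\pi)$ with $\alpha_j\to\pi$ such that, for each $j$, the isosceles triangle whose angle at the apex (between the two equal sides) is $\alpha_j$ is Euclidean sub-$p_j$-toral.
   Context: A $p$-torus is a group isomorphic to $(\mathbb{Z}_p)^\alpha$ for some $\alpha\ge1$. A set $X\subset\mathbb{R}^k$ is Euclidean sub-$p$-toral if there exist $n\ge k$, a $p$-torus $G$ and an action of $G$ on $\mathbb{R}^n$ by isometries such that $X$ (viewed in $\mathbb{R}^n$ via the standard inclusion $\mathbb{R}^k\subset\mathbb{R}^n$) is contained in a single $G$-orbit. A triangle is identified with its set of three vertices. *)

theory Defs
  imports Complex_Main "HOL-Computational_Algebra.Primes"
begin

text \<open>Points of R^n are represented as functions nat => real vanishing at all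
  indices >= n; the standard inclusion R^k into R^n (k <= n) is then literally the
  inclusion of sets.\<close>

definition Rn :: "nat \<Rightarrow> (nat \<Rightarrow> real) set" where
  "Rn n = {x. \<forall>i\<ge>n. x i = 0}"

definition edist :: "nat \<Rightarrow> (nat \<Rightarrow> real) \<Rightarrow> (nat \<Rightarrow> real) \<Rightarrow> real" where
  "edist n x y = sqrt (\<Sum>i<n. (x i - y i)^2)"

definition isometry_of_Rn :: "nat \<Rightarrow> ((nat \<Rightarrow> real) \<Rightarrow> (nat \<Rightarrow> real)) \<Rightarrow> bool" where
  "isometry_of_Rn n f \<longleftrightarrow> f ` Rn n = Rn n \<and>
     (\<forall>x\<in>Rn n. \<forall>y\<in>Rn n. edist n (f x) (f y) = edist n x y)"

definition ptorus :: "nat \<Rightarrow> nat \<Rightarrow> (nat \<Rightarrow> nat) set" where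
  "ptorus p \<alpha> = {g. (\<forall>i<\<alpha>. g i < p) \<and> (\<forall>i\<ge>\<alpha>. g i = 0)}"

definition ptorus_add :: "nat \<Rightarrow> (nat \<Rightarrow> nat) \<Rightarrow> (nat \<Rightarrow> nat) \<Rightarrow> (nat \<Rightarrow> nat)" where
  "ptorus_add p g h = (\<lambda>i. (g i + h i) mod p)"

definition ptorus_isometric_action ::
  "nat \<Rightarrow> nat \<Rightarrow> nat \<Rightarrow> ((nat \<Rightarrow> nat) \<Rightarrow> (nat \<Rightarrow> real) \<Rightarrow> (nat \<Rightarrow> real)) \<Rightarrow> bool" where
  "ptorus_isometric_action p \<alpha> n \<rho> \<longleftrightarrow>
     (\<forall>g\<in>ptorus p \<alpha>. isometry_of_Rn n (\<rho> g)) \<and>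
     (\<forall>x\<in>Rn n. \<rho> (\<lambda>_. 0) x = x) \<and>
     (\<forall>g\<in>ptorus p \<alpha>. \<forall>h\<in>ptorus p \<alpha>. \<forall>x\<in>Rn n.
        \<rho> (ptorus_add p g h) x = \<rho> g (\<rho> h x))"

definition euclidean_sub_ptoral :: "nat \<Rightarrow> nat \<Rightarrow> (nat \<Rightarrow> real) set \<Rightarrow> bool" where
  "euclidean_sub_ptoral p k X \<longleftrightarrow> X \<subseteq> Rn k \<and>
     (\<exists>n \<alpha> \<rho>. n \<ge> k \<and> \<alpha> \<ge> 1 \<and> ptorus_isometric_action p \<alpha> n \<rho> \<and>
        (\<exists>x\<in>Rn n. X \<subseteq> {\<rho> g x | g. g \<in> ptorus p \<alpha>}))"

definition isosceles_triangle :: "real \<Rightarrow> (nat \<Rightarrow> real) set" where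
  "isosceles_triangle a =
     {(\<lambda>i. 0),
      (\<lambda>i. if i = 0 then 1 else 0),
      (\<lambda>i. if i = 0 then cos a else if i = 1 then sin a else 0)}"

end

theory Submission
  imports Defs
begin

definition toC :: "(nat \<Rightarrow> real) \<Rightarrow> complex" where
  "toC x = Complex (x 0) (x 1)"
definition toR :: "complex \<Rightarrow> (nat \<Rightarrow> real)" where
  "toR z = (\<lambda>i. if i = 0 then Re z else if i = 1 then Im z else 0)"
definition ww :: "nat \<Rightarrow> complex" where
  "ww p = cis (2*pi/real p)"
definition cc :: "nat \<Rightarrow> complex" where
  "cc p = 1 / (1 - ww p)"
definition rho :: "nat \<Rightarrow> (nat \<Rightarrow> nat) \<Rightarrow> (nat \<Rightarrow> real) \<Rightarrow> (nat \<Rightarrow> real)" where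
  "rho p g x = toR (cc p + ww p ^ (g 0) * (toC x - cc p))"

lemma toC_toR[simp]: "toC (toR z) = z"
  by (simp add: toC_def toR_def)

lemma toR_toC: "x \<in> Rn 2 \<Longrightarrow> toR (toC x) = x"
  by (rule ext) (auto simp: toC_def toR_def Rn_def)

lemma toR_Rn[simp]: "toR z \<in> Rn 2"
  by (simp add: toR_def Rn_def)

lemma edist_toC: "edist 2 x y = cmod (toC x - toC y)"
  by (simp add: edist_def cmod_def toC_def numeral_2_eq_2)

lemma ww_norm[simp]: "cmod (ww p) = 1"
  by (simp add: ww_def)

lemma ww_pow_p: "p > 0 \<Longrightarrow> ww p ^ p = 1"
  by (simp add: ww_def DeMoivre)

lemma ww_pow_mod: "p > 0 \<Longrightarrow> ww p ^ (n mod p) = ww p ^ n"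
proof -
  assume "p > 0"
  have "ww p ^ n = ww p ^ (p * (n div p) + n mod p)" by simp
  also have "\<dots> = (ww p ^ p) ^ (n div p) * ww p ^ (n mod p)"
    by (simp only: power_add power_mult)
  finally show ?thesis using ww_pow_p[OF \<open>p>0\<close>] by simp
qed

lemma ww_ne1: assumes "p \<ge> 2" shows "ww p \<noteq> 1"
proof
  assume "ww p = 1"
  hence "cos (2*pi/real p) = 1" by (simp add: ww_def complex_eq_iff)
  then obtain k :: int where k: "2*pi/real p = 2*pi*k"
    using cos_one_2pi_int by (metis mult.commute mult.left_commute)
  have pp: "real p \<ge> 2" using assms by simp
  have "0 < 2*pi/real p" using pp by simp
  moreover have "2*pi/real p < 2*pi" using pp by (simp add: field_simps)
  ultimately have "0 < k" "k < 1" using k by (auto simp: mult_less_cancel_left_pos zero_less_mult_iff)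
  thus False by simp
qed

lemma action: assumes "p \<ge> 2" shows "ptorus_isometric_action p 1 2 (rho p)"
proof -
  have p0: "p > 0" using assms by simp
  have iso: "isometry_of_Rn 2 (rho p g)" for g
  proof -
    have "rho p g ` Rn 2 = Rn 2"
    proof
      show "rho p g ` Rn 2 \<subseteq> Rn 2" by (auto simp: rho_def)
      show "Rn 2 \<subseteq> rho p g ` Rn 2"
      proof
        fix y assume y: "y \<in> Rn 2"
        have wn: "ww p ^ g 0 \<noteq> 0" using ww_norm[of p] by (metis norm_zero power_eq_0_iff zero_neq_one)
        let ?x = "toR (cc p + (toC y - cc p) / ww p ^ (g 0))"
        have "rho p g ?x = toR (toC y)" using wn by (simp add: rho_def)
        also have "\<dots> = y" using toR_toC[OF y] .
        finally show "y \<in> rho p g ` Rn 2" by (metis image_eqI toR_Rn)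
      qed
    qed
    moreover have "edist 2 (rho p g x) (rho p g y) = edist 2 x y" for x y
    proof -
      have "cc p + ww p ^ g 0 * (toC x - cc p) - (cc p + ww p ^ g 0 * (toC y - cc p))
            = ww p ^ g 0 * (toC x - toC y)" by (simp add: algebra_simps)
      thus ?thesis by (simp add: edist_toC rho_def norm_mult norm_power)
    qed
    ultimately show ?thesis by (simp add: isometry_of_Rn_def)
  qed
  have id: "rho p (\<lambda>_. 0) x = x" if "x \<in> Rn 2" for x
    using that by (simp add: rho_def toR_toC)
  have hom: "rho p (ptorus_add p g h) x = rho p g (rho p h x)" for g h x
    by (simp add: rho_def ptorus_add_def ww_pow_mod[OF p0] power_add algebra_simps)
  show ?thesis using iso id hom by (simp add: ptorus_isometric_action_def)
qed

lemma main: assumes "p \<ge> 2"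
  shows "euclidean_sub_ptoral p 2 (isosceles_triangle (pi - 2*pi/real p))"
proof -
  have p0: "p > 0" using assms by simp
  let ?x = "(\<lambda>i. 0) :: nat \<Rightarrow> real"
  have x: "?x \<in> Rn 2" by (simp add: Rn_def)
  have n1: "1 - ww p \<noteq> 0" using ww_ne1[OF assms] by simp
  define g1 where "g1 = (\<lambda>i::nat. if i = 0 then 1 else 0::nat)"
  define g2 where "g2 = (\<lambda>i::nat. if i = 0 then p - 1 else 0::nat)"
  have g1: "g1 \<in> ptorus p 1" using assms by (simp add: g1_def ptorus_def)
  have g2: "g2 \<in> ptorus p 1" using assms by (simp add: g2_def ptorus_def)
  have g0: "(\<lambda>_. 0) \<in> ptorus p 1" using assms by (simp add: ptorus_def)
  have tc0: "toC ?x = 0" by (simp add: toC_def complex_eq_iff)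
  have e1: "rho p g1 ?x = (\<lambda>i. if i = 0 then 1 else 0)"
  proof -
    have "cc p + ww p * (0 - cc p) = 1" using n1 by (simp add: cc_def field_simps)
    thus ?thesis by (auto simp: rho_def g1_def tc0 toR_def)
  qed
  have e2: "rho p g2 ?x = (\<lambda>i. if i = 0 then cos (pi - 2*pi/real p)
               else if i = 1 then sin (pi - 2*pi/real p) else 0)"
  proof -
    have wp1: "ww p ^ (p - 1) = cnj (ww p)"
    proof -
      have "ww p ^ (p - 1) * ww p = 1" using ww_pow_p[OF p0] p0
        by (metis Suc_diff_1 power_Suc2)
      moreover have "cnj (ww p) * ww p = 1"
        by (metis complex_norm_square mult.commute of_real_1 one_power2 ww_norm)
      ultimately show ?thesis using ww_norm[of p]
        by (metis mult_cancel_right norm_zero zero_neq_one)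
    qed
    have cw: "cnj (ww p) * ww p = 1"
      by (metis complex_norm_square mult.commute of_real_1 one_power2 ww_norm)
    have "cc p + cnj (ww p) * (0 - cc p) = - cnj (ww p)"
    proof -
      have "1 - cnj (ww p) = - cnj (ww p) * (1 - ww p)" using cw by (simp add: algebra_simps)
      thus ?thesis using n1 by (simp add: cc_def field_simps)
    qed
    moreover have "- cnj (ww p) = cis (pi - 2*pi/real p)"
      by (simp add: ww_def complex_eq_iff)
    ultimately have "cc p + ww p ^ (p - 1) * (0 - cc p) = cis (pi - 2*pi/real p)"
      using wp1 by simp
    thus ?thesis by (auto simp: rho_def g2_def tc0 toR_def)
  qed
  have e0: "rho p (\<lambda>_. 0) ?x = ?x" using x by (simp add: rho_def toR_toC)
  have sub: "isosceles_triangle (pi - 2*pi/real p) \<subseteq> {rho p g ?x | g. g \<in> ptorus p 1}"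
    unfolding isosceles_triangle_def
    by (intro subsetI) (auto intro: exI[of _ "\<lambda>_. 0"] exI[of _ g1] exI[of _ g2] simp: e0 e1 e2 g0 g1 g2 simp del: One_nat_def)
  have "isosceles_triangle (pi - 2*pi/real p) \<subseteq> Rn 2"
    by (simp add: isosceles_triangle_def Rn_def)
  thus ?thesis unfolding euclidean_sub_ptoral_def using action[OF assms] x sub
    by (intro conjI exI[of _ 2] exI[of _ 1] exI[of _ "rho p"]) auto
qed

theorem lemma4:
  shows "\<exists>(p :: nat \<Rightarrow> nat) (a :: nat \<Rightarrow> real).
           (\<forall>j. prime (p j)) \<and> filterlim p at_top sequentially \<and>
           (\<forall>j. 0 < a j \<and> a j < pi) \<and> a \<longlonglongrightarrow> pi \<and>
           (\<forall>j. euclidean_sub_ptoral (p j) 2 (isosceles_triangle (a j)))"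
proof -
  define p where "p j = (SOME q. prime q \<and> j + 2 < q)" for j :: nat
  have pj: "prime (p j) \<and> j + 2 < p j" for j
    unfolding p_def by (rule someI_ex) (rule bigger_prime)
  define a where "a j = pi - 2*pi/real (p j)" for j
  have lim: "filterlim p at_top sequentially"
    by (rule filterlim_at_top_mono[OF filterlim_ident]) (rule always_eventually, metis pj less_imp_le add_lessD1)
  have lr: "filterlim (\<lambda>j. real (p j)) at_top sequentially"
    using filterlim_compose[OF filterlim_real_sequentially lim] by simp
  have "(\<lambda>j. 2*pi / real (p j)) \<longlonglongrightarrow> 0"
    by (rule tendsto_divide_0[OF tendsto_const lr[THEN filterlim_at_top_imp_at_infinity]])
  hence alim: "a \<longlonglongrightarrow> pi" unfolding a_def
    using tendsto_diff[OF tendsto_const, of _ 0 sequentially pi] by simp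
  have apos: "0 < a j \<and> a j < pi" for j
  proof -
    have pp: "real (p j) > 2" using pj[of j] by simp
    have "2*pi/real (p j) < pi" using pp pi_gt_zero by (simp add: field_simps)
    moreover have "0 < 2*pi/real (p j)" using pp by simp
    ultimately show ?thesis by (simp add: a_def)
  qed
  have "euclidean_sub_ptoral (p j) 2 (isosceles_triangle (a j))" for j
    unfolding a_def using main pj[of j] by simp
  thus ?thesis using pj lim alim apos by blast
qed

end
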